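(* Suppose $p_0$ has support $\{0,\dots,S\}$ with $S\in\mathbb N\setminus\{0\}$. Then with probability one there exists $n_0$ such that for all $n\ge n_0$ the support of $\hat p_n$ is either $\{0,\dots,S\}$ or $\{0,\dots,S+1\}$.
   Context: Let $\mathbb N=\{0,1,2,\dots\}$. For a real sequence $p$ and $k\ge1$ let $\Delta p(k)=p(k+1)-2p(k)+p(k-1)$; $p$ is convex if $\Delta p(k)\ge0$ for all $k\ge1$; $\mathcal C$ is the set of convex sequences with $\sum_kp(k)^2<\infty$. Let $p_0$ be a convex probability mass function on $\mathbb N$ (so $p_0(k)>0$ for $k\le S$ and $p_0(k)=0$ for $k\ge S+1$). Let $X_1,X_2,\dots$ be i.i.d. with pmf $p_0$, $p_n(j)=\frac1n\sum_{i=1}^n\mathbb 1\{X_i=j\}$, and let the least squares estimator $\hat p_n$ be the unique minimizer over $\mathcal C$ of $\frac12\sum_{j\in\mathbb N}(p_n(j)-p(j))^2$. The support of a sequence $p$ is $\{k: p(k)\neq 0\}$. *)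

theory Defs
  imports "HOL-Probability.Probability"
begin

definition convex_seq :: "(nat \<Rightarrow> real) \<Rightarrow> bool" where
  "convex_seq p \<longleftrightarrow> (\<forall>k\<ge>1. p (k + 1) - 2 * p k + p (k - 1) \<ge> 0)"

definition convex_class :: "(nat \<Rightarrow> real) set" where
  "convex_class = {p. convex_seq p \<and> summable (\<lambda>k. (p k)\<^sup>2)}"

definition ls_objective :: "(nat \<Rightarrow> real) \<Rightarrow> (nat \<Rightarrow> real) \<Rightarrow> real" where
  "ls_objective q p = (1/2) * (\<Sum>j. (q j - p j)\<^sup>2)"

definition lse :: "(nat \<Rightarrow> real) \<Rightarrow> (nat \<Rightarrow> real)" where
  "lse q = (THE p. p \<in> convex_class \<and> (\<forall>p'\<in>convex_class. ls_objective q p \<le> ls_objective q p'))"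

definition emp_pmf :: "(nat \<Rightarrow> 'a \<Rightarrow> nat) \<Rightarrow> nat \<Rightarrow> 'a \<Rightarrow> nat \<Rightarrow> real" where
  "emp_pmf X n \<omega> j = real (card {i\<in>{1..n}. X i \<omega> = j}) / real n"

definition seq_support :: "(nat \<Rightarrow> real) \<Rightarrow> nat set" where
  "seq_support p = {k. p k \<noteq> 0}"

end

theory Submission imports Defs begin

lemma convex_class_props:
  assumes "p \<in> convex_class"
  shows "p (Suc k) \<le> p k" and "p k \<ge> 0"
proof -
  have cv: "\<And>k. k \<ge> 1 \<Longrightarrow> p (k + 1) - 2 * p k + p (k - 1) \<ge> 0"
    using assms by (auto simp: convex_class_def convex_seq_def)
  have sm: "summable (\<lambda>k. (p k)\<^sup>2)" using assms by (auto simp: convex_class_def)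
  have "(\<lambda>k. (p k)\<^sup>2) \<longlonglongrightarrow> 0" using summable_LIMSEQ_zero[OF sm] .
  then have "(\<lambda>k. sqrt ((p k)\<^sup>2)) \<longlonglongrightarrow> sqrt 0" by (intro tendsto_intros)
  then have "(\<lambda>k. \<bar>p k\<bar>) \<longlonglongrightarrow> 0" by simp
  then have lim: "\<exists>N. \<forall>k\<ge>N. \<bar>p k\<bar> < e" if "e > 0" for e
    using that by (metis (no_types, lifting) LIMSEQ_D abs_abs diff_zero real_norm_def)
  define d where "d k = p (Suc k) - p k" for k
  have dinc: "incseq d"
  proof (rule incseq_SucI)
    fix k show "d k \<le> d (Suc k)" using cv[of "Suc k"] by (simp add: d_def)
  qed
  have dle: "d m \<le> 0" for m
  proof (rule ccontr)
    assume "\<not> d m \<le> 0"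
    then have dm: "d m > 0" by simp
    have grow: "p (m + i) \<ge> p m + real i * d m" for i
    proof (induction i)
      case 0 then show ?case by simp
    next
      case (Suc i)
      have "d m \<le> d (m + i)" using dinc by (simp add: incseq_def)
      moreover have "p (m + Suc i) = p (m + i) + d (m + i)" by (simp add: d_def)
      ultimately show ?case using Suc by (simp add: algebra_simps)
    qed
    obtain N where N: "\<forall>k\<ge>N. \<bar>p k\<bar> < 1" using lim[of 1] by auto
    obtain n0 where n0: "1 + \<bar>p m\<bar> < real n0 * d m" using ex_less_of_nat_mult[OF dm] by blast
    have "real n0 * d m \<le> real (n0 + N) * d m" using dm by (intro mult_right_mono) auto
    then have "p (m + (n0 + N)) > 1" using grow[of "n0 + N"] n0 by linarith
    moreover have "\<bar>p (m + (n0 + N))\<bar> < 1" using N by auto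
    ultimately show False by linarith
  qed
  show dec: "p (Suc k) \<le> p k" for k using dle[of k] by (simp add: d_def)
  have decs: "decseq p" by (rule decseq_SucI) (rule dec)
  show "p k \<ge> 0"
  proof (rule ccontr)
    assume "\<not> p k \<ge> 0"
    then have pk: "p k < 0" by simp
    obtain N where N: "\<forall>j\<ge>N. \<bar>p j\<bar> < - p k" using lim[of "- p k"] pk by auto
    have "p (max k N) \<le> p k" using decs by (simp add: decseq_def)
    moreover have "\<bar>p (max k N)\<bar> < - p k" using N by auto
    ultimately show False by linarith
  qed
qed

lemma convex_class_mono:
  assumes "p \<in> convex_class" "k \<le> m" shows "p m \<le> p k"
proof -
  have "decseq p" by (rule decseq_SucI) (rule convex_class_props(1)[OF assms(1)])
  then show ?thesis using assms(2) by (simp add: decseq_def)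
qed

definition tri :: "nat \<Rightarrow> nat \<Rightarrow> real" where "tri j k = real (j - k)"

lemma tri_delta:
  assumes "i \<ge> 1" "j \<ge> 1"
  shows "tri j (i + 1) - 2 * tri j i + tri j (i - 1) = (if i = j then 1 else 0)"
  using assms unfolding tri_def by (cases "i < j") (auto simp: of_nat_diff)

definition Gs :: "(nat \<Rightarrow> real) \<Rightarrow> nat \<Rightarrow> real" where
  "Gs r j = (\<Sum>k<j. r k * real (j - k))"

lemma Gs_Suc: "Gs r (Suc n) = Gs r n + (\<Sum>k<Suc n. r k)"
proof -
  have "Gs r (Suc n) = (\<Sum>k<n. r k * real (Suc n - k)) + r n"
    by (simp add: Gs_def)
  also have "(\<Sum>k<n. r k * real (Suc n - k)) = (\<Sum>k<n. r k * real (n - k) + r k)"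
    by (intro sum.cong) (auto simp: Suc_diff_le of_nat_Suc algebra_simps)
  finally show ?thesis by (simp add: Gs_def sum.distrib)
qed

lemma abel:
  "(\<Sum>k<Suc m. r k * p k) = p (Suc m) * (\<Sum>k<Suc m. r k) + (p m - p (Suc m)) * Gs r (Suc m)
     + (\<Sum>j\<in>{1..m}. (p (j + 1) - 2 * p j + p (j - 1)) * Gs r j)"
proof (induction m)
  case 0 then show ?case by (simp add: Gs_def algebra_simps)
next
  case (Suc m)
  have G2: "Gs r (Suc (Suc m)) = Gs r (Suc m) + (\<Sum>k<Suc m. r k) + r (Suc m)"
    using Gs_Suc[of r "Suc m"] by simp
  have S: "(\<Sum>j\<in>{1..Suc m}. (p (j + 1) - 2 * p j + p (j - 1)) * Gs r j)
     = (\<Sum>j\<in>{1..m}. (p (j + 1) - 2 * p j + p (j - 1)) * Gs r j) + (p (Suc m + 1) - 2 * p (Suc m) + p m) * Gs r (Suc m)"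
    by (simp add: sum.cl_ivl_Suc)
  show ?case using Suc unfolding S G2 by (simp add: algebra_simps)
qed


definition Cf :: "nat \<Rightarrow> (nat \<Rightarrow> real) set" where
  "Cf N = {p \<in> convex_class. \<forall>k\<ge>N. p k = 0}"

lemma Cf_I:
  assumes "convex_seq p" "\<And>k. k \<ge> N \<Longrightarrow> p k = 0"
  shows "p \<in> Cf N"
proof -
  have "summable (\<lambda>k. (p k)\<^sup>2)"
    by (rule summable_finite[of "{..<N}"]) (use assms(2) in auto)
  then show ?thesis using assms by (auto simp: Cf_def convex_class_def)
qed

lemma convex_seq_comb:
  assumes "convex_seq p" "convex_seq p'" "\<alpha> \<ge> 0" "\<beta> \<ge> 0"
  shows "convex_seq (\<lambda>k. \<alpha> * p k + \<beta> * p' k)"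
  unfolding convex_seq_def
proof (intro allI impI)
  fix k :: nat assume k: "k \<ge> 1"
  have "p (k + 1) - 2 * p k + p (k - 1) \<ge> 0" "p' (k + 1) - 2 * p' k + p' (k - 1) \<ge> 0"
    using assms(1,2) k unfolding convex_seq_def by blast+
  then have "\<alpha> * (p (k + 1) - 2 * p k + p (k - 1)) + \<beta> * (p' (k + 1) - 2 * p' k + p' (k - 1)) \<ge> 0"
    using assms(3,4) by (metis add_nonneg_nonneg mult_nonneg_nonneg)
  then show "\<alpha> * p (k + 1) + \<beta> * p' (k + 1) - 2 * (\<alpha> * p k + \<beta> * p' k) + (\<alpha> * p (k - 1) + \<beta> * p' (k - 1)) \<ge> 0"
    by (simp add: algebra_simps)
qed

lemma quad_step:
  fixes a b e :: real
  assumes "a > 0" "b \<ge> 0" "e > 0"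
  shows "\<exists>t. 0 < t \<and> t \<le> e \<and> t * t * b - 2 * t * a < 0"
proof (cases "b = 0")
  case True then show ?thesis using assms by (intro exI[of _ e]) auto
next
  case False
  then have b: "b > 0" using assms by simp
  define t where "t = min e (a / b)"
  have t0: "t > 0" using assms b by (simp add: t_def)
  have "t * b \<le> a" using b by (simp add: t_def min_def field_simps)
  then have "t * t * b \<le> t * a" using t0 by (metis mult.assoc mult_left_mono less_imp_le)
  then show ?thesis using t0 assms by (intro exI[of _ t]) (auto simp: t_def)
qed

lemma cont_coord [continuous_intros]: "continuous_on S (\<lambda>x::nat\<Rightarrow>real. x i)"
  by (rule continuous_on_subset[OF continuous_on_product_coordinates]) simp

lemma fin_min:
  fixes q :: "nat \<Rightarrow> real"
  obtains ps where "ps \<in> Cf N" "\<And>p. p \<in> Cf N \<Longrightarrow> (\<Sum>k<N. (q k - ps k) * (p k - ps k)) \<le> 0"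
proof -
  define T where "T = (\<Sum>k<N. (q k)\<^sup>2)"
  define B where "B = 2 * (T + 1 + (\<Sum>k<N. \<bar>q k\<bar>))"
  have T0: "T \<ge> 0" by (simp add: T_def sum_nonneg)
  define Sb where "Sb i = (if i < N then {-B..B} else {0::real})" for i
  define K where "K = PiE UNIV Sb"
  have "compactin (product_topology (\<lambda>_. euclidean) UNIV) K"
    unfolding K_def compactin_PiE by (auto simp: Sb_def)
  then have cK: "compact K" by (simp add: euclidean_product_topology)
  define L where "L = K \<inter> {p. convex_seq p}"
  have "closed {p::nat\<Rightarrow>real. convex_seq p}"
    unfolding convex_seq_def Collect_all_eq Collect_imp_eq
    by (intro closed_INT ballI closed_Collect_le closed_Un) (auto intro!: continuous_intros)
  then have cL: "compact L" unfolding L_def using cK by (simp add: compact_Int_closed)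
  have LC: "L \<subseteq> Cf N"
  proof
    fix p assume "p \<in> L"
    then have "convex_seq p" "\<forall>i. p i \<in> (if i < N then {- B..B} else {0})"
      by (auto simp: L_def K_def Sb_def PiE_iff)
    then show "p \<in> Cf N" by (intro Cf_I) (auto, metis not_less singletonD)
  qed
  have B0: "B \<ge> 0" using T0 by (simp add: B_def sum_nonneg add_nonneg_nonneg)
  have 0: "(\<lambda>_. 0) \<in> L"
    using B0 by (simp add: L_def K_def Sb_def PiE_iff convex_seq_def)
  define F where "F p = (\<Sum>k<N. (q k - p k)\<^sup>2)" for p :: "nat \<Rightarrow> real"
  have "continuous_on L F" unfolding F_def by (intro continuous_intros)
  then obtain ps where ps: "ps \<in> L" "\<And>y. y \<in> L \<Longrightarrow> F ps \<le> F y"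
    using continuous_attains_inf[OF cL _] 0 by blast
  have Fps: "F ps \<le> T" using ps(2)[OF 0] by (simp add: F_def T_def)
  have bnd: "\<bar>ps k\<bar> \<le> B / 2" if "k < N" for k
  proof -
    have "(q k - ps k)\<^sup>2 \<le> F ps" unfolding F_def
      using that by (intro member_le_sum) auto
    then have sq: "(q k - ps k)\<^sup>2 \<le> T" using Fps by simp
    have "\<bar>q k - ps k\<bar> \<le> T + 1"
    proof (rule ccontr)
      assume "\<not> ?thesis"
      then have "T + 1 < \<bar>q k - ps k\<bar>" by simp
      then have "(T+1) * (T+1) < \<bar>q k - ps k\<bar> * \<bar>q k - ps k\<bar>" using T0
        by (intro mult_strict_mono) auto
      moreover have "\<bar>q k - ps k\<bar> * \<bar>q k - ps k\<bar> = (q k - ps k)\<^sup>2"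
        by (simp add: power2_eq_square)
      moreover have "T \<le> (T+1) * (T+1)" using T0 by (simp add: algebra_simps add_nonneg_nonneg)
      ultimately show False using sq by linarith
    qed
    moreover have "\<bar>q k\<bar> \<le> (\<Sum>k<N. \<bar>q k\<bar>)" using that by (intro member_le_sum) auto
    ultimately show ?thesis by (simp add: B_def)
  qed
  have psC: "ps \<in> Cf N" using LC ps(1) by auto
  have var: "(\<Sum>k<N. (q k - ps k) * (p k - ps k)) \<le> 0" if p: "p \<in> Cf N" for p
  proof (rule ccontr)
    define v where "v k = p k - ps k" for k
    define a where "a = (\<Sum>k<N. (q k - ps k) * v k)"
    define b where "b = (\<Sum>k<N. (v k)\<^sup>2)"
    define V where "V = (\<Sum>k<N. \<bar>v k\<bar>)"
    assume "\<not> ?thesis"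
    then have a: "a > 0" by (simp add: a_def v_def)
    have V0: "V \<ge> 0" by (simp add: V_def sum_nonneg)
    have B0: "B > 0" using T0 by (simp add: B_def sum_nonneg add_pos_nonneg)
    define e where "e = min 1 (B / (2 * (V + 1)))"
    have e0: "e > 0" using B0 V0 by (simp add: e_def)
    obtain t where t: "0 < t" "t \<le> e" "t * t * b - 2 * t * a < 0"
      using quad_step[OF a _ e0, of b] by (auto simp: b_def sum_nonneg)
    define pt where "pt k = (1 - t) * ps k + t * p k" for k
    have cps: "convex_seq ps" "convex_seq p" using psC p by (auto simp: Cf_def convex_class_def)
    have t1: "t \<le> 1" using t e_def by simp
    have "convex_seq pt" unfolding pt_def using cps t t1 by (intro convex_seq_comb) auto
    moreover have "pt \<in> K"
    proof -
      have "\<bar>pt k\<bar> \<le> B" if "k < N" for k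
      proof -
        have "pt k = ps k + t * v k" by (simp add: pt_def v_def algebra_simps)
        moreover have "\<bar>v k\<bar> \<le> V" unfolding V_def using that by (intro member_le_sum) auto
        moreover have "t * V \<le> B / 2"
        proof -
          have "t * V \<le> (B / (2 * (V + 1))) * V" using t e_def V0
            by (intro mult_right_mono) auto
          also have "\<dots> \<le> B / 2" using B0 V0 by (simp add: field_simps)
          finally show ?thesis .
        qed
        moreover have "t * \<bar>v k\<bar> \<le> t * V" using t \<open>\<bar>v k\<bar> \<le> V\<close> by (intro mult_left_mono) auto
        moreover have "\<bar>ps k + t * v k\<bar> \<le> \<bar>ps k\<bar> + \<bar>t * v k\<bar>" by (rule abs_triangle_ineq)
        moreover have "\<bar>t * v k\<bar> = t * \<bar>v k\<bar>" using t(1) by (simp add: abs_mult)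
        ultimately show ?thesis using bnd[OF that] by linarith
      qed
      moreover have "pt k = 0" if "k \<ge> N" for k
        using psC p that by (auto simp: pt_def Cf_def)
      ultimately show ?thesis unfolding K_def Sb_def PiE_iff
        by (auto simp: abs_le_iff, smt (verit))
    qed
    ultimately have "pt \<in> L" by (simp add: L_def)
    then have "F ps \<le> F pt" by (rule ps(2))
    moreover have "F pt = F ps - 2 * t * a + t * t * b"
    proof -
      have "F pt = (\<Sum>k<N. (q k - ps k)\<^sup>2 - 2 * t * ((q k - ps k) * v k) + t * t * (v k)\<^sup>2)"
        unfolding F_def by (intro sum.cong) (auto simp: pt_def v_def power2_eq_square algebra_simps)
      then show ?thesis
        by (simp add: F_def a_def b_def sum.distrib sum_subtractf sum_distrib_left)
    qed
    ultimately show False using t by linarith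
  qed
  show ?thesis using that psC var by blast
qed


lemma sq_diff_summable:
  fixes f g :: "nat \<Rightarrow> real"
  assumes "summable (\<lambda>k. (f k)\<^sup>2)" "summable (\<lambda>k. (g k)\<^sup>2)"
  shows "summable (\<lambda>k. (f k - g k)\<^sup>2)"
proof (rule summable_comparison_test[where g = "\<lambda>k. 2 * (f k)\<^sup>2 + 2 * (g k)\<^sup>2"])
  show "\<exists>N. \<forall>n\<ge>N. norm ((f n - g n)\<^sup>2) \<le> 2 * (f n)\<^sup>2 + 2 * (g n)\<^sup>2"
  proof (intro exI allI impI)
    fix n
    have "0 \<le> (f n + g n)\<^sup>2" by simp
    moreover have "2*(f n)\<^sup>2 + 2*(g n)\<^sup>2 - (f n - g n)\<^sup>2 = (f n + g n)\<^sup>2"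
      by (simp add: power2_eq_square algebra_simps)
    moreover have "norm ((f n - g n)\<^sup>2) = (f n - g n)\<^sup>2" by simp
    ultimately show "norm ((f n - g n)\<^sup>2) \<le> 2 * (f n)\<^sup>2 + 2 * (g n)\<^sup>2"
      by linarith
  qed
  show "summable (\<lambda>k. 2 * (f k)\<^sup>2 + 2 * (g k)\<^sup>2)"
    using assms by (intro summable_add summable_mult)
qed

lemma tri_convex: "j \<ge> 1 \<Longrightarrow> convex_seq (tri j)"
  unfolding convex_seq_def using tri_delta by simp

lemma tri_zero: "k \<ge> j \<Longrightarrow> tri j k = 0"
  by (simp add: tri_def)

lemma Gs_eq:
  assumes "j \<le> N" shows "Gs r j = (\<Sum>k<N. r k * tri j k)"
proof -
  have "Gs r j = (\<Sum>k<j. r k * tri j k)" by (simp add: Gs_def tri_def)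
  also have "\<dots> = (\<Sum>k<N. r k * tri j k)"
    using assms by (intro sum.mono_neutral_left) (auto simp: tri_zero)
  finally show ?thesis .
qed

lemma det:
  fixes p0 q :: "nat \<Rightarrow> real" and S :: nat
  assumes p0C: "convex_seq p0" and p0z: "\<And>k. k > S \<Longrightarrow> p0 k = 0" and p0S: "p0 S > 0"
    and qz: "\<And>k. k > S \<Longrightarrow> q k = 0"
    and close: "\<And>k. k \<le> S \<Longrightarrow> \<bar>q k - p0 k\<bar> \<le> p0 S / (4 * (real S + 2))"
  shows "seq_support (lse q) = {0..S} \<or> seq_support (lse q) = {0..S+1}"
proof -
  define N where "N = Suc (Suc S)"
  define c where "c = p0 S / 4"
  define \<delta> where "\<delta> = c / (real S + 2)"
  have c0: "c > 0" using p0S by (simp add: c_def)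
  have d0: "\<delta> > 0" using c0 by (simp add: \<delta>_def)
  have close': "\<bar>q k - p0 k\<bar> \<le> \<delta>" if "k \<le> S" for k
    using close[OF that] by (simp add: \<delta>_def c_def)
  obtain ps where psC: "ps \<in> Cf N"
    and var: "\<And>p. p \<in> Cf N \<Longrightarrow> (\<Sum>k<N. (q k - ps k) * (p k - ps k)) \<le> 0"
    using fin_min[of N q] by blast
  define r where "r k = q k - ps k" for k
  have psz: "ps k = 0" if "k \<ge> N" for k using psC that by (auto simp: Cf_def)
  have rz: "r k = 0" if "k \<ge> N" for k using psz[OF that] qz[of k] that by (simp add: r_def N_def)
  have psconv: "convex_seq ps" and psCC: "ps \<in> convex_class" using psC by (auto simp: Cf_def convex_class_def)
  define ip where "ip f = (\<Sum>k<N. r k * f k)" for f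
  have var': "ip p - ip ps \<le> 0" if "p \<in> Cf N" for p
    using var[OF that] by (simp add: ip_def r_def sum_subtractf[symmetric] algebra_simps)
  have p0Cf: "p0 \<in> Cf N" using p0C p0z by (intro Cf_I) (auto simp: N_def)
  define a where "a k = q k - p0 k" for k
  define b where "b k = ps k - p0 k" for k
  have "(\<Sum>k<N. (a k - b k) * (p0 k - ps k)) \<le> 0"
    using var[OF p0Cf] by (simp add: a_def b_def)
  moreover have "(\<Sum>k<N. (a k - b k) * (p0 k - ps k)) = (\<Sum>k<N. (b k)\<^sup>2 - a k * b k)"
    by (intro sum.cong) (auto simp: b_def power2_eq_square algebra_simps)
  ultimately have ab: "(\<Sum>k<N. (b k)\<^sup>2) \<le> (\<Sum>k<N. a k * b k)"
    by (simp add: sum_subtractf)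
  have "(\<Sum>k<N. a k * b k) \<le> (\<Sum>k<N. (a k)\<^sup>2 / 2 + (b k)\<^sup>2 / 2)"
  proof (rule sum_mono)
    fix k have "0 \<le> (a k - b k)\<^sup>2" by simp
    then show "a k * b k \<le> (a k)\<^sup>2 / 2 + (b k)\<^sup>2 / 2" by (simp add: power2_eq_square algebra_simps)
  qed
  then have bb: "(\<Sum>k<N. (b k)\<^sup>2) \<le> (\<Sum>k<N. (a k)\<^sup>2)" using ab by (simp add: sum.distrib sum_divide_distrib[symmetric])
  have "(\<Sum>k<N. (a k)\<^sup>2) \<le> (\<Sum>k<N. \<delta>\<^sup>2)"
  proof (rule sum_mono)
    fix k assume "k \<in> {..<N}"
    show "(a k)\<^sup>2 \<le> \<delta>\<^sup>2"
    proof (cases "k \<le> S")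
      case True
      then have "\<bar>a k\<bar> \<le> \<delta>" using close' by (simp add: a_def)
      then show ?thesis by (metis abs_ge_zero power2_abs power_mono)
    next
      case False then show ?thesis by (simp add: a_def qz p0z)
    qed
  qed
  also have "\<dots> = real N * \<delta>\<^sup>2" by simp
  also have "\<dots> = c\<^sup>2 / (real S + 2)"
  proof -
    have pS: "real S + 2 > 0" by simp
    have "real N = real S + 2" by (simp add: N_def)
    then show ?thesis using pS unfolding \<delta>_def by (simp add: power2_eq_square divide_simps)
  qed
  also have "\<dots> < c\<^sup>2" using c0 by (simp add: field_simps add_pos_nonneg)
  finally have aa: "(\<Sum>k<N. (a k)\<^sup>2) < c\<^sup>2" .
  have bk: "\<bar>b k\<bar> < c" if "k < N" for k
  proof -
    have "(b k)\<^sup>2 \<le> (\<Sum>k<N. (b k)\<^sup>2)" using that by (intro member_le_sum) auto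
    then have "(b k)\<^sup>2 < c\<^sup>2" using bb aa by linarith
    then show ?thesis using power2_less_imp_less[of "\<bar>b k\<bar>" c] c0 by simp
  qed
  have psS: "ps S > 3 * c"
  proof -
    have "\<bar>ps S - p0 S\<bar> < c" using bk[of S] by (simp add: N_def b_def)
    then show ?thesis unfolding c_def by linarith
  qed
  have psS1: "ps (Suc S) < c" using bk[of "Suc S"] p0z[of "Suc S"] by (auto simp: N_def b_def abs_less_iff)
  have psS2: "ps (Suc (Suc S)) = 0" using psz by (simp add: N_def)
  define c' where "c' = ps (Suc S + 1) - 2 * ps (Suc S) + ps (Suc S - 1)"
  have c'0: "c' > 0" using psS psS1 psS2 c0 by (simp add: c'_def)
  have "ip (\<lambda>_. 0) - ip ps \<le> 0" using var'[of "\<lambda>_. 0"] by (simp add: Cf_I convex_seq_def)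
  moreover have "ip (\<lambda>k. 2 * ps k) - ip ps \<le> 0"
  proof -
    have "(\<lambda>k. 2 * ps k) = (\<lambda>k. 2 * ps k + 0 * ps k)" by simp
    then have "convex_seq (\<lambda>k. 2 * ps k)" using convex_seq_comb[OF psconv psconv, of 2 0] by simp
    then show ?thesis using var' psz by (simp add: Cf_I)
  qed
  ultimately have ip_ps: "ip ps = 0"
    by (simp add: ip_def sum_distrib_left[symmetric] mult.left_commute[of _ 2])
  have Gj: "Gs r j \<le> 0" if "1 \<le> j" "j \<le> N" for j
  proof -
    have "convex_seq (\<lambda>k. 1 * ps k + 1 * tri j k)"
      using that by (intro convex_seq_comb psconv tri_convex) auto
    then have "(\<lambda>k. ps k + tri j k) \<in> Cf N"
      using that psz by (intro Cf_I) (auto simp: tri_zero)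
    then have "ip (\<lambda>k. ps k + tri j k) - ip ps \<le> 0" by (rule var')
    then have "ip (tri j) \<le> 0" by (simp add: ip_def algebra_simps sum.distrib)
    then show ?thesis using Gs_eq[OF that(2)] by (simp add: ip_def)
  qed
  have GS1: "Gs r (Suc S) \<ge> 0"
  proof -
    define pm where "pm k = ps k - c' * tri (Suc S) k" for k
    have "convex_seq pm" unfolding convex_seq_def
    proof (intro allI impI)
      fix i :: nat assume i: "i \<ge> 1"
      have e: "pm (i + 1) - 2 * pm i + pm (i - 1) =
         (ps (i + 1) - 2 * ps i + ps (i - 1)) - c' * (tri (Suc S) (i + 1) - 2 * tri (Suc S) i + tri (Suc S) (i - 1))"
        by (simp add: pm_def algebra_simps)
      show "pm (i + 1) - 2 * pm i + pm (i - 1) \<ge> 0"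
      proof (cases "i = Suc S")
        case True then show ?thesis unfolding e using tri_delta[OF i, of "Suc S"] by (simp add: c'_def)
      next
        case False
        then show ?thesis unfolding e using tri_delta[OF i, of "Suc S"] psconv i by (simp add: convex_seq_def)
      qed
    qed
    then have "pm \<in> Cf N" using psz by (intro Cf_I) (auto simp: pm_def tri_zero N_def)
    then have "ip pm - ip ps \<le> 0" by (rule var')
    then have "- c' * ip (tri (Suc S)) \<le> 0"
      by (simp add: ip_def pm_def algebra_simps sum_subtractf sum_distrib_left sum_negf)
    then have "ip (tri (Suc S)) \<ge> 0" using c'0 by (simp add: zero_le_mult_iff)
    then show ?thesis using Gs_eq[of "Suc S" N r] by (simp add: ip_def N_def)
  qed
  have R: "(\<Sum>k<N. r k) \<le> 0"
  proof -
    have "(\<Sum>k<N. r k) = ip (tri N) - ip (tri (Suc S))"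
      unfolding ip_def sum_subtractf[symmetric]
      by (intro sum.cong) (auto simp: tri_def N_def algebra_simps of_nat_diff)
    also have "\<dots> = Gs r N - Gs r (Suc S)" using Gs_eq[of N N r] Gs_eq[of "Suc S" N r]
      by (simp add: ip_def N_def)
    finally show ?thesis using Gj[of N] GS1 by (simp add: N_def)
  qed
  have ipC: "ip p \<le> 0" if pC: "p \<in> convex_class" for p
  proof -
    have "ip p = p (Suc (Suc S)) * (\<Sum>k<Suc (Suc S). r k) + (p (Suc S) - p (Suc (Suc S))) * Gs r (Suc (Suc S))
       + (\<Sum>j\<in>{1..Suc S}. (p (j + 1) - 2 * p j + p (j - 1)) * Gs r j)"
      unfolding ip_def N_def by (rule abel)
    moreover have "p (Suc (Suc S)) * (\<Sum>k<Suc (Suc S). r k) \<le> 0"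
      using R convex_class_props(2)[OF pC] by (simp add: N_def mult_nonneg_nonpos)
    moreover have "(p (Suc S) - p (Suc (Suc S))) * Gs r (Suc (Suc S)) \<le> 0"
      using Gj[of N] convex_class_props(1)[OF pC] by (simp add: N_def mult_nonneg_nonpos)
    moreover have "(\<Sum>j\<in>{1..Suc S}. (p (j + 1) - 2 * p j + p (j - 1)) * Gs r j) \<le> 0"
    proof (rule sum_nonpos)
      fix j assume j: "j \<in> {1..Suc S}"
      have "p (j + 1) - 2 * p j + p (j - 1) \<ge> 0" using pC j by (auto simp: convex_class_def convex_seq_def)
      moreover have "Gs r j \<le> 0" using j by (intro Gj) (auto simp: N_def)
      ultimately show "(p (j + 1) - 2 * p j + p (j - 1)) * Gs r j \<le> 0" by (simp add: mult_nonneg_nonpos)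
    qed
    ultimately show ?thesis by linarith
  qed
  have sqq: "summable (\<lambda>k. (q k)\<^sup>2)"
    by (rule summable_finite[of "{..S}"]) (auto simp: qz)
  have objps: "ls_objective q ps = (1/2) * (\<Sum>k<N. (r k)\<^sup>2)"
  proof -
    have "(\<Sum>j. (q j - ps j)\<^sup>2) = (\<Sum>k<N. (r k)\<^sup>2)"
    proof (subst suminf_finite[of "{..<N}"])
      show "(\<Sum>k<N. (q k - ps k)\<^sup>2) = (\<Sum>k<N. (r k)\<^sup>2)" by (simp add: r_def)
      fix n assume "n \<notin> {..<N}"
      then have "r n = 0" by (intro rz) auto
      then show "(q n - ps n)\<^sup>2 = 0" by (simp add: r_def)
    qed auto
    then show ?thesis by (simp add: ls_objective_def)
  qed
  have comp: "ls_objective q ps + (1/2) * (\<Sum>k. (ps k - p k)\<^sup>2) \<le> ls_objective q p"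
    if pC: "p \<in> convex_class" for p
  proof -
    define e where "e k = ps k - p k" for k
    define h where "h k = 2 * r k * e k + (r k)\<^sup>2" for k
    have se: "summable (\<lambda>k. (e k)\<^sup>2)" unfolding e_def
      using psCC pC by (intro sq_diff_summable) (auto simp: convex_class_def)
    have hz: "h k = 0" if "k \<notin> {..<N}" for k using rz that by (simp add: h_def)
    have sh: "summable h" by (rule summable_finite[of "{..<N}", OF _ hz]) auto
    have "(\<lambda>k. (q k - p k)\<^sup>2) = (\<lambda>k. (e k)\<^sup>2 + h k)"
      by (auto simp: e_def h_def r_def power2_eq_square algebra_simps)
    then have "(\<Sum>k. (q k - p k)\<^sup>2) = (\<Sum>k. (e k)\<^sup>2) + (\<Sum>k. h k)"
      using suminf_add[OF se sh] by simp
    also have "(\<Sum>k. h k) = (\<Sum>k<N. h k)" by (rule suminf_finite[of "{..<N}", OF _ hz]) auto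
    also have "\<dots> = 2 * ip e + (\<Sum>k<N. (r k)\<^sup>2)"
      by (simp add: h_def ip_def sum.distrib sum_distrib_left mult.assoc)
    also have "ip e = ip ps - ip p" by (simp add: ip_def e_def algebra_simps sum_subtractf)
    finally have "(\<Sum>k. (q k - p k)\<^sup>2) = (\<Sum>k. (e k)\<^sup>2) + (2 * (ip ps - ip p) + (\<Sum>k<N. (r k)\<^sup>2))" .
    then show ?thesis using ip_ps ipC[OF pC] objps by (simp add: ls_objective_def e_def)
  qed
  have lse_eq: "lse q = ps"
    unfolding lse_def
  proof (rule the_equality)
    show "ps \<in> convex_class \<and> (\<forall>p'\<in>convex_class. ls_objective q ps \<le> ls_objective q p')"
    proof (intro conjI ballI psCC)
      fix p' assume "p' \<in> convex_class"
      have "0 \<le> (\<Sum>k. (ps k - p' k)\<^sup>2)"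
        using psCC \<open>p' \<in> convex_class\<close>
        by (intro suminf_nonneg sq_diff_summable) (auto simp: convex_class_def)
      with comp[OF \<open>p' \<in> convex_class\<close>] show "ls_objective q ps \<le> ls_objective q p'"
        by linarith
    qed
  next
    fix p assume p: "p \<in> convex_class \<and> (\<forall>p'\<in>convex_class. ls_objective q p \<le> ls_objective q p')"
    show "p = ps"
    proof (rule ccontr)
      assume "p \<noteq> ps"
      then obtain i where i: "ps i - p i \<noteq> 0" by (metis eq_iff_diff_eq_0 ext)
      have se: "summable (\<lambda>k. (ps k - p k)\<^sup>2)"
        using psCC p by (intro sq_diff_summable) (auto simp: convex_class_def)
      have "0 < (\<Sum>k. (ps k - p k)\<^sup>2)" by (rule suminf_pos2[OF se, of i]) (use i in auto)
      moreover have "ls_objective q p \<le> ls_objective q ps" using p psCC by auto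
      ultimately show False using comp[of p] p by auto
    qed
  qed
  have pos: "ps k > 0" if "k \<le> S" for k
    using convex_class_mono[OF psCC that] psS c0 by linarith
  show ?thesis
  proof (cases "ps (Suc S) = 0")
    case True
    have "seq_support ps = {0..S}"
    proof (intro equalityI subsetI)
      fix x assume "x \<in> seq_support ps"
      then have "ps x \<noteq> 0" by (simp add: seq_support_def)
      then show "x \<in> {0..S}"
        using psz[of x] True by (cases "x \<le> S"; cases "x = Suc S") (auto simp: N_def)
    next
      fix x assume "x \<in> {0..S}"
      then show "x \<in> seq_support ps" using pos[of x] by (simp add: seq_support_def)
    qed
    then show ?thesis using lse_eq by simp
  next
    case False
    have "seq_support ps = {0..S+1}"
    proof (intro equalityI subsetI)
      fix x assume "x \<in> seq_support ps"
      then have "ps x \<noteq> 0" by (simp add: seq_support_def)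
      then show "x \<in> {0..S+1}"
        using psz[of x] by (cases "x \<le> Suc S") (auto simp: N_def)
    next
      fix x assume "x \<in> {0..S+1}"
      then show "x \<in> seq_support ps" using pos[of x] False
        by (cases "x = Suc S") (auto simp: seq_support_def)
    qed
    then show ?thesis using lse_eq by simp
  qed
qed


lemma (in prob_space) hoeff_bound:
  fixes X :: "nat \<Rightarrow> 'a \<Rightarrow> nat"
  assumes meas: "\<And>i. X i \<in> measurable M (count_space UNIV)"
    and indep: "indep_vars (\<lambda>_. count_space UNIV) X UNIV"
    and distr: "\<And>i. measure M {\<omega>\<in>space M. X i \<omega> = j} = pj"
    and d0: "\<delta> > 0" and n: "n \<ge> 1"
  shows "measure M {\<omega>\<in>space M. \<delta> \<le> \<bar>emp_pmf X n \<omega> j - pj\<bar>} \<le> 2 * exp (-2*\<delta>\<^sup>2) ^ n"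
proof -
  define Y where "Y i \<omega> = (if X i \<omega> = j then 1 else 0 :: real)" for i \<omega>
  define f where "f x = (if x = j then 1 else 0 :: real)" for x :: nat
  have Yf: "Y i = (\<lambda>\<omega>. f (X i \<omega>))" for i by (auto simp: Y_def f_def)
  have indY: "indep_vars (\<lambda>_. borel) Y {1..n}"
    unfolding Yf
    by (rule indep_vars_compose2[OF indep_vars_subset[OF indep]]) auto
  have setmeas: "{\<omega>\<in>space M. X i \<omega> = j} \<in> sets M" for i
  proof -
    have "{\<omega>\<in>space M. X i \<omega> = j} = X i -` {j} \<inter> space M" by auto
    then show ?thesis using measurable_sets[OF meas[of i], of "{j}"] by simp
  qed
  have EY: "expectation (Y i) = pj" for i
  proof -
    have "expectation (Y i) = expectation (indicator {\<omega>\<in>space M. X i \<omega> = j})"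
      by (intro Bochner_Integration.integral_cong) (auto simp: Y_def indicator_def)
    also have "\<dots> = pj" proof -
      have "{\<omega> \<in> space M. X i \<omega> = j} \<inter> space M = {\<omega> \<in> space M. X i \<omega> = j}" by auto
      then show ?thesis using distr[of i] by simp
    qed
    finally show ?thesis .
  qed
  interpret H: Hoeffding_ineq M "{1..n}" Y "\<lambda>_. 0" "\<lambda>_. 1" "\<Sum>i\<in>{1..n}. expectation (Y i)"
  proof unfold_locales
    show "finite {1..n}" by simp
    show "indep_vars (\<lambda>_. borel) Y {1..n}" by (rule indY)
    fix i show "AE x in M. Y i x \<in> {0..1}" by (intro AE_I2) (simp add: Y_def)
  qed
  have mu: "(\<Sum>i\<in>{1..n}. expectation (Y i)) = real n * pj" by (simp add: EY)
  have nd: "real n * \<delta> \<ge> 0" using d0 by simp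
  have "(\<Sum>i\<in>{1..n}. (1 - (0::real))\<^sup>2) > 0" using n by simp
  from H.Hoeffding_ineq_abs_ge[OF nd this]
  have hb: "prob {x \<in> space M. real n * \<delta> \<le> \<bar>(\<Sum>i\<in>{1..n}. Y i x) - real n * pj\<bar>}
      \<le> 2 * exp (- 2 * (real n * \<delta>)\<^sup>2 / real n)" unfolding mu by simp
  have e: "exp (- 2 * (real n * \<delta>)\<^sup>2 / real n) = exp (-2*\<delta>\<^sup>2) ^ n"
  proof -
    have "- 2 * (real n * \<delta>)\<^sup>2 / real n = real n * (-2*\<delta>\<^sup>2)" using n by (simp add: power2_eq_square field_simps)
    then have "exp (- 2 * (real n * \<delta>)\<^sup>2 / real n) = exp (real n * (-2*\<delta>\<^sup>2))" by simp
    also have "\<dots> = exp (-2*\<delta>\<^sup>2) ^ n" by (rule exp_of_nat_mult)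
    finally show ?thesis .
  qed
  have sumY: "(\<Sum>i\<in>{1..n}. Y i x) = real (card {i\<in>{1..n}. X i x = j})" for x
  proof -
    have "(\<Sum>i\<in>{1..n}. Y i x) = (\<Sum>i\<in>{1..n}. if X i x = j then 1 else 0)"
      by (simp add: Y_def)
    also have "\<dots> = (\<Sum>i\<in>{i\<in>{1..n}. X i x = j}. 1)"
      by (rule sum.inter_filter[symmetric]) simp
    also have "\<dots> = real (card {i\<in>{1..n}. X i x = j})" by simp
    finally show ?thesis .
  qed
  have "{\<omega>\<in>space M. \<delta> \<le> \<bar>emp_pmf X n \<omega> j - pj\<bar>}
      = {x \<in> space M. real n * \<delta> \<le> \<bar>(\<Sum>i\<in>{1..n}. Y i x) - real n * pj\<bar>}"
  proof -
    have "\<delta> \<le> \<bar>c / real n - pj\<bar> \<longleftrightarrow> real n * \<delta> \<le> \<bar>c - real n * pj\<bar>" for c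
    proof -
      have np: "real n > 0" using n by simp
      have "\<bar>c - real n * pj\<bar> = real n * \<bar>c / real n - pj\<bar>"
      proof -
        have "c - real n * pj = real n * (c / real n - pj)" using np by (simp add: field_simps)
        then show ?thesis using np by (simp add: abs_mult)
      qed
      then show ?thesis using np by simp
    qed
    then show ?thesis unfolding sumY by (simp add: emp_pmf_def)
  qed
  with hb e show ?thesis by simp
qed


theorem proposition4:
  fixes M :: "'a measure" and X :: "nat \<Rightarrow> 'a \<Rightarrow> nat"
    and p0 :: "nat \<Rightarrow> real" and S :: nat
  assumes "prob_space M"
    and meas: "\<And>i. X i \<in> measurable M (count_space UNIV)"
    and indep: "prob_space.indep_vars M (\<lambda>_. count_space UNIV) X UNIV"
    and distr: "\<And>i k. measure M {\<omega>\<in>space M. X i \<omega> = k} = p0 k"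
    and nonneg: "\<And>k. p0 k \<ge> 0"
    and sums1: "p0 sums 1"
    and conv: "convex_seq p0"
    and S_pos: "S \<noteq> 0"
    and supp: "seq_support p0 = {0..S}"
  shows "AE \<omega> in M. \<exists>n0. \<forall>n\<ge>n0.
           seq_support (lse (emp_pmf X n \<omega>)) = {0..S}
         \<or> seq_support (lse (emp_pmf X n \<omega>)) = {0..S+1}"
proof -
  interpret prob_space M by fact
  have p0z: "p0 k = 0" if "k > S" for k
  proof (rule ccontr)
    assume "p0 k \<noteq> 0"
    then have "k \<in> seq_support p0" by (simp add: seq_support_def)
    then show False using supp that by simp
  qed
  have p0S: "p0 S > 0"
  proof -
    have "S \<in> seq_support p0" using supp by simp
    then show ?thesis using nonneg[of S] by (simp add: seq_support_def)
  qed
  define \<delta> where "\<delta> = p0 S / (4 * (real S + 2))"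
  have d0: "\<delta> > 0" using p0S by (simp add: \<delta>_def)
  have setmeas: "{\<omega>\<in>space M. X i \<omega> = k} \<in> sets M" for i k
  proof -
    have "{\<omega>\<in>space M. X i \<omega> = k} = X i -` {k} \<inter> space M" by auto
    then show ?thesis using measurable_sets[OF meas[of i], of "{k}"] by simp
  qed
  have AE1: "AE \<omega> in M. \<forall>i k. S < k \<longrightarrow> X i \<omega> \<noteq> k"
  proof -
    have "AE \<omega> in M. S < k \<longrightarrow> X i \<omega> \<noteq> k" for i k
    proof (cases "S < k")
      case True
      have "emeasure M {\<omega>\<in>space M. X i \<omega> = k} = 0"
        using distr[of i k] p0z[OF True] setmeas[of i k] by (simp add: emeasure_eq_measure)
      then have "AE \<omega> in M. X i \<omega> \<noteq> k"
        using setmeas[of i k] by (intro AE_I[of _ _ "{\<omega>\<in>space M. X i \<omega> = k}"]) auto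
      then show ?thesis by auto
    next
      case False then show ?thesis by simp
    qed
    then show ?thesis by (simp add: AE_all_countable)
  qed
  have AE2: "AE \<omega> in M. \<forall>j. j \<le> S \<longrightarrow> eventually (\<lambda>n. \<bar>emp_pmf X n \<omega> j - p0 j\<bar> < \<delta>) sequentially"
  proof -
    have "AE \<omega> in M. eventually (\<lambda>n. \<bar>emp_pmf X n \<omega> j - p0 j\<bar> < \<delta>) sequentially" for j
    proof -
      define A where "A n = {\<omega>\<in>space M. \<delta> \<le> \<bar>emp_pmf X n \<omega> j - p0 j\<bar>}" for n
      have Ameas: "A n \<in> sets M" for n
      proof -
        have "(\<lambda>\<omega>. emp_pmf X n \<omega> j) \<in> borel_measurable M"
        proof -
          have "(\<lambda>\<omega>. emp_pmf X n \<omega> j) = (\<lambda>\<omega>. (\<Sum>i\<in>{1..n}. (\<lambda>x. if x = j then 1 else 0 :: real) (X i \<omega>)) / real n)"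
          proof
            fix \<omega>
            have eq0: "(\<Sum>i\<in>{1..n}. if X i \<omega> = j then (1::real) else 0) = (\<Sum>i\<in>{i\<in>{1..n}. X i \<omega> = j}. 1)"
              by (rule sum.inter_filter[symmetric]) simp
            have eq: "(\<Sum>i\<in>{1..n}. if X i \<omega> = j then (1::real) else 0) = real (card {i\<in>{1..n}. X i \<omega> = j})"
              unfolding eq0 by simp
            show "emp_pmf X n \<omega> j = (\<Sum>i\<in>{1..n}. (\<lambda>x. if x = j then 1 else 0 :: real) (X i \<omega>)) / real n"
              by (simp only: emp_pmf_def eq)
          qed
          moreover have "(\<lambda>\<omega>. (\<Sum>i\<in>{1..n}. (\<lambda>x. if x = j then 1 else 0 :: real) (X i \<omega>)) / real n) \<in> borel_measurable M"
            by (intro borel_measurable_divide borel_measurable_sum measurable_compose[OF meas] borel_measurable_const)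
              (simp add: measurable_count_space)
          ultimately show ?thesis by simp
        qed
        then show ?thesis unfolding A_def by measurable
      qed
      have bnd: "measure M (A n) \<le> 2 * exp (-2*\<delta>\<^sup>2) ^ n" for n
      proof (cases "n \<ge> 1")
        case True
        show ?thesis unfolding A_def
          by (rule hoeff_bound[OF meas indep distr d0 True])
      next
        case False
        then have "n = 0" by simp
        have "measure M (A n) \<le> 1" by (rule prob_le_1)
        moreover have "2 * exp (-2*\<delta>\<^sup>2) ^ n = 2" using \<open>n = 0\<close> by simp
        ultimately show ?thesis by linarith
      qed
      have "summable (\<lambda>n. 2 * exp (-2*\<delta>\<^sup>2) ^ n)"
        using d0 by (intro summable_mult summable_geometric) simp
      then have "summable (\<lambda>n. measure M (A n))"
        by (rule summable_comparison_test'[where N = 0]) (use bnd in simp)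
      then have "AE x in M. eventually (\<lambda>n. x \<in> space M - A n) sequentially"
        using Ameas by (intro borel_cantelli_AE1) (auto simp: emeasure_eq_measure)
      then show ?thesis
      proof (rule AE_mp[OF _ AE_I2[OF impI]])
        fix x assume "x \<in> space M" "eventually (\<lambda>n. x \<in> space M - A n) sequentially"
        then show "eventually (\<lambda>n. \<bar>emp_pmf X n x j - p0 j\<bar> < \<delta>) sequentially"
          by (elim eventually_mono) (auto simp: A_def)
      qed
    qed
    then show ?thesis by (simp add: AE_all_countable)
  qed
  show ?thesis
    using AE1 AE2
  proof (elim AE_mp, intro AE_I2 impI)
    fix \<omega>
    assume ev: "\<forall>j. j \<le> S \<longrightarrow> eventually (\<lambda>n. \<bar>emp_pmf X n \<omega> j - p0 j\<bar> < \<delta>) sequentially"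
      and nx: "\<forall>i k. S < k \<longrightarrow> X i \<omega> \<noteq> k"
    have "eventually (\<lambda>n. \<forall>j\<in>{..S}. \<bar>emp_pmf X n \<omega> j - p0 j\<bar> < \<delta>) sequentially"
      using ev by (intro eventually_ball_finite) auto
    then obtain n0 where n0: "\<And>n j. n \<ge> n0 \<Longrightarrow> j \<le> S \<Longrightarrow> \<bar>emp_pmf X n \<omega> j - p0 j\<bar> < \<delta>"
      unfolding eventually_sequentially by auto
    show "\<exists>n0. \<forall>n\<ge>n0. seq_support (lse (emp_pmf X n \<omega>)) = {0..S}
         \<or> seq_support (lse (emp_pmf X n \<omega>)) = {0..S+1}"
    proof (intro exI allI impI)
      fix n assume n: "n \<ge> n0"
      show "seq_support (lse (emp_pmf X n \<omega>)) = {0..S} \<or> seq_support (lse (emp_pmf X n \<omega>)) = {0..S+1}"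
      proof (rule det[OF conv p0z p0S])
        fix k assume "S < k"
        then have "{i\<in>{1..n}. X i \<omega> = k} = {}" using nx by auto
        then show "emp_pmf X n \<omega> k = 0" by (simp add: emp_pmf_def)
      next
        fix k assume "k \<le> S"
        then show "\<bar>emp_pmf X n \<omega> k - p0 k\<bar> \<le> p0 S / (4 * (real S + 2))"
          using n0[OF n] by (fastforce simp: \<delta>_def)
      qed
    qed
  qed
qed

end
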